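(* Let $\mathcal P=\langle F,R\rangle$ be a program and $H$ a hypothesis. Define $IF(F,H)=\{A\mid F(A)\neq\mathcal U,\ H(A)\neq\mathcal U,\ F(A)\neq H(A)\}$, $PF_0=\emptyset$ and, for $i\ge1$, $$PF_i=\{A\mid A\leftarrow B\in R \text{ and } B\not\equiv H(A)\text{ w.r.t. } F\oplus H_{/(\mathcal{HB}_{\mathcal P}\setminus IF(F,H))\setminus PF_{i-1}}\}.$$ Then the sequence $(PF_i)_{i\ge0}$ is increasing with respect to set inclusion and reaches its limit $PF$ in a finite number of steps.
   Context: Let $\langle \mathcal{B},\le_t,\le_k\rangle$ be a complete, infinitely distributive bilattice with negation satisfying the infinitary interlacing conditions; $\wedge,\vee$ are meet/join for $\le_t$, $\otimes,\oplus$ meet/join for $\le_k$, $\mathcal U$ is the bottom of $\le_k$. A closed formula is built from ground literals and elements of $\mathcal B$ using $\wedge,\vee,\otimes,\oplus,\exists,\forall$ (quantifiers over closed terms). A program $\mathcal P=\langle F,R\rangle$ consists of a function $F$ from the Herbrand base $\mathcal{HB}_{\mathcal P}$ to $\mathcal B$ and a finite set $R$ of ground clauses $A\leftarrow B$, each ground atom being the head of at most one clause. A hypothesis (interpretation) is a function $\mathcal{HB}_{\mathcal P}\to\mathcal B$, extended to closed formulas homomorphically ($I(\neg A)=\neg I(A)$, $I(X\wedge Y)=I(X)\wedge I(Y)$ etc., $\exists$ as $\bigvee$, $\forall$ as $\bigwedge$ over closed instances). Operations on interpretations are pointwise, e.g. $(I\oplus J)(A)=I(A)\oplus J(A)$.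 $I\le J$ means $I(A)\neq\mathcal U\Rightarrow I(A)=J(A)$ for all $A$. $I_{/S}$ is $I$ on $S$ and $\mathcal U$ elsewhere. $B\equiv_I\alpha$ means $J(B)=\alpha$ for all $J$ with $I\le J$; $B\not\equiv_I\alpha$ is its negation. *)

theory Defs
  imports Main
begin

record 'b bilattice =
  leqt :: "'b \<Rightarrow> 'b \<Rightarrow> bool"
  leqk :: "'b \<Rightarrow> 'b \<Rightarrow> bool"
  bneg :: "'b \<Rightarrow> 'b"

definition is_lub :: "('b \<Rightarrow> 'b \<Rightarrow> bool) \<Rightarrow> 'b set \<Rightarrow> 'b \<Rightarrow> bool" where
  "is_lub le S x \<longleftrightarrow> (\<forall>y\<in>S. le y x) \<and> (\<forall>z. (\<forall>y\<in>S. le y z) \<longrightarrow> le x z)"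

definition is_glb :: "('b \<Rightarrow> 'b \<Rightarrow> bool) \<Rightarrow> 'b set \<Rightarrow> 'b \<Rightarrow> bool" where
  "is_glb le S x \<longleftrightarrow> (\<forall>y\<in>S. le x y) \<and> (\<forall>z. (\<forall>y\<in>S. le z y) \<longrightarrow> le z x)"

definition lub :: "('b \<Rightarrow> 'b \<Rightarrow> bool) \<Rightarrow> 'b set \<Rightarrow> 'b" where
  "lub le S = (THE x. is_lub le S x)"

definition glb :: "('b \<Rightarrow> 'b \<Rightarrow> bool) \<Rightarrow> 'b set \<Rightarrow> 'b" where
  "glb le S = (THE x. is_glb le S x)"

definition tInf :: "'b bilattice \<Rightarrow> 'b set \<Rightarrow> 'b" where "tInf BL S = glb (leqt BL) S"
definition tSup :: "'b bilattice \<Rightarrow> 'b set \<Rightarrow> 'b" where "tSup BL S = lub (leqt BL) S"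
definition kInf :: "'b bilattice \<Rightarrow> 'b set \<Rightarrow> 'b" where "kInf BL S = glb (leqk BL) S"
definition kSup :: "'b bilattice \<Rightarrow> 'b set \<Rightarrow> 'b" where "kSup BL S = lub (leqk BL) S"

definition tand :: "'b bilattice \<Rightarrow> 'b \<Rightarrow> 'b \<Rightarrow> 'b" where "tand BL a b = tInf BL {a, b}"
definition tor :: "'b bilattice \<Rightarrow> 'b \<Rightarrow> 'b \<Rightarrow> 'b" where "tor BL a b = tSup BL {a, b}"
definition kand :: "'b bilattice \<Rightarrow> 'b \<Rightarrow> 'b \<Rightarrow> 'b" where "kand BL a b = kInf BL {a, b}"
definition kor :: "'b bilattice \<Rightarrow> 'b \<Rightarrow> 'b \<Rightarrow> 'b" where "kor BL a b = kSup BL {a, b}"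

definition Ubot :: "'b bilattice \<Rightarrow> 'b" where "Ubot BL = kInf BL UNIV"

definition partial_ord :: "('b \<Rightarrow> 'b \<Rightarrow> bool) \<Rightarrow> bool" where
  "partial_ord le \<longleftrightarrow> (\<forall>x. le x x) \<and> (\<forall>x y. le x y \<longrightarrow> le y x \<longrightarrow> x = y)
     \<and> (\<forall>x y z. le x y \<longrightarrow> le y z \<longrightarrow> le x z)"

definition complete_ord :: "('b \<Rightarrow> 'b \<Rightarrow> bool) \<Rightarrow> bool" where
  "complete_ord le \<longleftrightarrow> partial_ord le \<and> (\<forall>S. \<exists>x. is_lub le S x) \<and> (\<forall>S. \<exists>x. is_glb le S x)"

definition is_negation :: "'b bilattice \<Rightarrow> bool" where
  "is_negation BL \<longleftrightarrow>
     (\<forall>a b. leqt BL a b \<longrightarrow> leqt BL (bneg BL b) (bneg BL a)) \<and>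
     (\<forall>a b. leqk BL a b \<longrightarrow> leqk BL (bneg BL a) (bneg BL b)) \<and>
     (\<forall>a. bneg BL (bneg BL a) = a)"

text \<open>Infinitary interlacing: each infinitary operation is monotone w.r.t. both orders.
  A family (a_i, b_i)_{i \<in> I} is represented by the set of its pairs P.\<close>
definition infinitary_interlaced :: "'b bilattice \<Rightarrow> bool" where
  "infinitary_interlaced BL \<longleftrightarrow>
     (\<forall>P. (\<forall>(a,b)\<in>P. leqk BL a b) \<longrightarrow>
        leqk BL (tInf BL (fst ` P)) (tInf BL (snd ` P)) \<and>
        leqk BL (tSup BL (fst ` P)) (tSup BL (snd ` P))) \<and>
     (\<forall>P. (\<forall>(a,b)\<in>P. leqt BL a b) \<longrightarrow>
        leqt BL (kInf BL (fst ` P)) (kInf BL (snd ` P)) \<and>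
        leqt BL (kSup BL (fst ` P)) (kSup BL (snd ` P)))"

definition distr :: "('b \<Rightarrow> 'b \<Rightarrow> 'b) \<Rightarrow> ('b set \<Rightarrow> 'b) \<Rightarrow> bool" where
  "distr op Op \<longleftrightarrow> (\<forall>a S. S \<noteq> {} \<longrightarrow> op a (Op S) = Op ((\<lambda>s. op a s) ` S))"

definition infinitely_distributive :: "'b bilattice \<Rightarrow> bool" where
  "infinitely_distributive BL \<longleftrightarrow>
     distr (tand BL) (tSup BL) \<and> distr (tand BL) (kInf BL) \<and> distr (tand BL) (kSup BL) \<and>
     distr (tor BL) (tInf BL) \<and> distr (tor BL) (kInf BL) \<and> distr (tor BL) (kSup BL) \<and>
     distr (kand BL) (tInf BL) \<and> distr (kand BL) (tSup BL) \<and> distr (kand BL) (kSup BL) \<and>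
     distr (kor BL) (tInf BL) \<and> distr (kor BL) (tSup BL) \<and> distr (kor BL) (kInf BL)"

definition good_bilattice :: "'b bilattice \<Rightarrow> bool" where
  "good_bilattice BL \<longleftrightarrow> complete_ord (leqt BL) \<and> complete_ord (leqk BL) \<and>
     is_negation BL \<and> infinitary_interlaced BL \<and> infinitely_distributive BL"

text \<open>'a: ground atoms (the Herbrand base), 't: closed terms (Herbrand universe),
  'b: bilattice values.  Quantifiers are represented by the function mapping each
  closed term to the corresponding closed instance of the body.\<close>

datatype ('a, 't, 'b) cformula =
    Pos 'a
  | Neg 'a
  | Val 'b
  | AndF "('a, 't, 'b) cformula" "('a, 't, 'b) cformula"
  | OrF "('a, 't, 'b) cformula" "('a, 't, 'b) cformula"
  | OtimesF "('a, 't, 'b) cformula" "('a, 't, 'b) cformula"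
  | OplusF "('a, 't, 'b) cformula" "('a, 't, 'b) cformula"
  | ExF "'t \<Rightarrow> ('a, 't, 'b) cformula"
  | AllF "'t \<Rightarrow> ('a, 't, 'b) cformula"

primrec eval :: "'b bilattice \<Rightarrow> ('a \<Rightarrow> 'b) \<Rightarrow> ('a, 't, 'b) cformula \<Rightarrow> 'b" where
  "eval BL I (Pos A) = I A"
| "eval BL I (Neg A) = bneg BL (I A)"
| "eval BL I (Val v) = v"
| "eval BL I (AndF X Y) = tand BL (eval BL I X) (eval BL I Y)"
| "eval BL I (OrF X Y) = tor BL (eval BL I X) (eval BL I Y)"
| "eval BL I (OtimesF X Y) = kand BL (eval BL I X) (eval BL I Y)"
| "eval BL I (OplusF X Y) = kor BL (eval BL I X) (eval BL I Y)"
| "eval BL I (ExF f) = tSup BL (range (\<lambda>t. eval BL I (f t)))"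
| "eval BL I (AllF f) = tInf BL (range (\<lambda>t. eval BL I (f t)))"

text \<open>A program \<langle>F, R\<rangle>: F :: 'a \<Rightarrow> 'b, R a finite set of ground clauses (head, body),
  each atom being the head of at most one clause.\<close>
definition is_program :: "('a \<Rightarrow> 'b) \<Rightarrow> ('a \<times> ('a, 't, 'b) cformula) set \<Rightarrow> bool" where
  "is_program F R \<longleftrightarrow> finite R \<and> (\<forall>A B B'. (A, B) \<in> R \<longrightarrow> (A, B') \<in> R \<longrightarrow> B = B')"

definition info_le :: "'b bilattice \<Rightarrow> ('a \<Rightarrow> 'b) \<Rightarrow> ('a \<Rightarrow> 'b) \<Rightarrow> bool" where
  "info_le BL I J \<longleftrightarrow> (\<forall>A. I A \<noteq> Ubot BL \<longrightarrow> I A = J A)"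

definition restrict_interp :: "'b bilattice \<Rightarrow> ('a \<Rightarrow> 'b) \<Rightarrow> 'a set \<Rightarrow> ('a \<Rightarrow> 'b)" where
  "restrict_interp BL I S = (\<lambda>A. if A \<in> S then I A else Ubot BL)"

definition oplus_interp :: "'b bilattice \<Rightarrow> ('a \<Rightarrow> 'b) \<Rightarrow> ('a \<Rightarrow> 'b) \<Rightarrow> ('a \<Rightarrow> 'b)" where
  "oplus_interp BL I J = (\<lambda>A. kor BL (I A) (J A))"

definition equiv_wrt :: "'b bilattice \<Rightarrow> ('a, 't, 'b) cformula \<Rightarrow> ('a \<Rightarrow> 'b) \<Rightarrow> 'b \<Rightarrow> bool" where
  "equiv_wrt BL B I \<alpha> \<longleftrightarrow> (\<forall>J. info_le BL I J \<longrightarrow> eval BL J B = \<alpha>)"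

definition IF_set :: "'b bilattice \<Rightarrow> ('a \<Rightarrow> 'b) \<Rightarrow> ('a \<Rightarrow> 'b) \<Rightarrow> 'a set" where
  "IF_set BL F H = {A. F A \<noteq> Ubot BL \<and> H A \<noteq> Ubot BL \<and> F A \<noteq> H A}"

primrec PF :: "'b bilattice \<Rightarrow> ('a \<Rightarrow> 'b) \<Rightarrow> ('a \<times> ('a, 't, 'b) cformula) set
                \<Rightarrow> ('a \<Rightarrow> 'b) \<Rightarrow> nat \<Rightarrow> 'a set" where
  "PF BL F R H 0 = {}"
| "PF BL F R H (Suc i) =
     {A. \<exists>B. (A, B) \<in> R \<and>
        \<not> equiv_wrt BL B
            (oplus_interp BL F (restrict_interp BL H ((UNIV - IF_set BL F H) - PF BL F R H i)))
            (H A)}"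

end

theory Submission
  imports Defs
begin

lemma lub_eq:
  assumes "partial_ord le" "is_lub le S x" shows "lub le S = x"
  unfolding lub_def
proof (rule the_equality)
  show "is_lub le S x" by fact
  fix y assume "is_lub le S y"
  with assms show "y = x" unfolding is_lub_def partial_ord_def by metis
qed

lemma glb_is:
  assumes "complete_ord le" shows "is_glb le S (glb le S)"
proof -
  from assms obtain x where x: "is_glb le S x" unfolding complete_ord_def by blast
  have "glb le S = x" unfolding glb_def
  proof (rule the_equality)
    show "is_glb le S x" by fact
    fix y assume "is_glb le S y"
    with assms x show "y = x" unfolding is_glb_def complete_ord_def partial_ord_def by metis
  qed
  with x show ?thesis by simp
qed

lemma kor_U:
  assumes "good_bilattice BL" shows "kor BL a (Ubot BL) = a"
proof -
  have co: "complete_ord (leqk BL)" using assms unfolding good_bilattice_def by simp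
  have "is_glb (leqk BL) UNIV (Ubot BL)" unfolding Ubot_def kInf_def using glb_is[OF co] .
  hence b: "leqk BL (Ubot BL) a" unfolding is_glb_def by simp
  have po: "partial_ord (leqk BL)" using co unfolding complete_ord_def by simp
  have r: "leqk BL a a" using po unfolding partial_ord_def by blast
  have "is_lub (leqk BL) {a, Ubot BL} a" using b r unfolding is_lub_def by blast
  thus ?thesis unfolding kor_def kSup_def by (rule lub_eq[OF po])
qed

lemma kor_idem:
  assumes "good_bilattice BL" shows "kor BL a a = a"
proof -
  have po: "partial_ord (leqk BL)" using assms unfolding good_bilattice_def complete_ord_def by simp
  have r: "leqk BL a a" using po unfolding partial_ord_def by blast
  have "is_lub (leqk BL) {a, a} a" using r unfolding is_lub_def by blast
  thus ?thesis unfolding kor_def kSup_def by (rule lub_eq[OF po])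
qed

lemma info_mono:
  assumes "good_bilattice BL" "S' \<subseteq> S" "S \<inter> IF_set BL F H = {}"
  shows "info_le BL (oplus_interp BL F (restrict_interp BL H S'))
                    (oplus_interp BL F (restrict_interp BL H S))"
  unfolding info_le_def oplus_interp_def restrict_interp_def
proof (intro allI impI)
  fix A assume h: "kor BL (F A) (if A \<in> S' then H A else Ubot BL) \<noteq> Ubot BL"
  show "kor BL (F A) (if A \<in> S' then H A else Ubot BL) = kor BL (F A) (if A \<in> S then H A else Ubot BL)"
  proof (cases "A \<in> S'")
    case True then show ?thesis using assms by auto
  next
    case False
    hence l: "kor BL (F A) (if A \<in> S' then H A else Ubot BL) = F A" using kor_U[OF assms(1)] by simp
    show ?thesis
    proof (cases "A \<in> S")
      case True
      hence "A \<notin> IF_set BL F H" using assms by auto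
      moreover have "F A \<noteq> Ubot BL" using h l by simp
      ultimately have "H A = Ubot BL \<or> F A = H A" unfolding IF_set_def by auto
      then show ?thesis using l True kor_U[OF assms(1)] kor_idem[OF assms(1)] by auto
    qed (simp add: kor_U[OF assms(1)] False)
  qed
qed

lemma equiv_mono:
  assumes "info_le BL I' I" "equiv_wrt BL B I' a" shows "equiv_wrt BL B I a"
  using assms unfolding equiv_wrt_def info_le_def by metis

lemma PF_step:
  assumes "good_bilattice BL" "X \<subseteq> Y"
  shows "{A. \<exists>B. (A, B) \<in> R \<and> \<not> equiv_wrt BL B
            (oplus_interp BL F (restrict_interp BL H ((UNIV - IF_set BL F H) - X))) (H A)}
       \<subseteq> {A. \<exists>B. (A, B) \<in> R \<and> \<not> equiv_wrt BL B
            (oplus_interp BL F (restrict_interp BL H ((UNIV - IF_set BL F H) - Y))) (H A)}"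
proof -
  have "info_le BL (oplus_interp BL F (restrict_interp BL H ((UNIV - IF_set BL F H) - Y)))
          (oplus_interp BL F (restrict_interp BL H ((UNIV - IF_set BL F H) - X)))"
    by (rule info_mono[OF assms(1)]) (use assms(2) in auto)
  thus ?thesis using equiv_mono[of BL _ _ _ "H _"] by blast
qed

lemma PF_mono_arg:
  assumes "good_bilattice BL" "PF BL F R H i \<subseteq> PF BL F R H j"
  shows "PF BL F R H (Suc i) \<subseteq> PF BL F R H (Suc j)"
  unfolding PF.simps(2) by (rule PF_step[OF assms])

lemma PF_suc:
  assumes "good_bilattice BL" shows "PF BL F R H i \<subseteq> PF BL F R H (Suc i)"
proof (induction i)
  case 0 then show ?case by simp
next
  case (Suc i)
  show ?case by (rule PF_mono_arg[OF assms Suc])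
qed

lemma PF_sub: "PF BL F R H i \<subseteq> fst ` R"
proof (cases i)
  case (Suc j)
  show ?thesis unfolding Suc PF.simps by (rule subsetI) (auto intro: rev_image_eqI)
qed simp

theorem mainTheorem4:
  fixes BL :: "'b bilattice"
    and F :: "'a \<Rightarrow> 'b"
    and R :: "('a \<times> ('a, 't, 'b) cformula) set"
    and H :: "'a \<Rightarrow> 'b"
  assumes "good_bilattice BL"
    and "is_program F R"
  shows "(\<forall>i j. i \<le> j \<longrightarrow> PF BL F R H i \<subseteq> PF BL F R H j) \<and>
         (\<exists>n. \<forall>m\<ge>n. PF BL F R H m = PF BL F R H n)"
proof
  have mono: "PF BL F R H i \<subseteq> PF BL F R H j" if "i \<le> j" for i j
    using that
  proof (induction j)
    case 0 then show ?case by simp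
  next
    case (Suc j)
    show ?case
    proof (cases "i = Suc j")
      case False
      hence "i \<le> j" using Suc.prems by simp
      hence "PF BL F R H i \<subseteq> PF BL F R H j" by (rule Suc.IH)
      also have "\<dots> \<subseteq> PF BL F R H (Suc j)" by (rule PF_suc[OF assms(1)])
      finally show ?thesis .
    qed simp
  qed
  thus "\<forall>i j. i \<le> j \<longrightarrow> PF BL F R H i \<subseteq> PF BL F R H j" by blast
  have fin: "finite (fst ` R)" using assms(2) unfolding is_program_def by simp
  have "\<exists>n. PF BL F R H n = PF BL F R H (Suc n)"
  proof (rule ccontr)
    assume contra: "\<not> ?thesis"
    hence ne: "PF BL F R H n \<subset> PF BL F R H (Suc n)" for n
    proof -
      have "PF BL F R H n \<noteq> PF BL F R H (Suc n)" using contra by blast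
      thus ?thesis using PF_suc[OF assms(1), of F R H n] by (rule psubsetI[rotated])
    qed
    have "n \<le> card (PF BL F R H n)" for n
    proof (induction n)
      case (Suc n)
      have "finite (PF BL F R H (Suc n))" by (rule finite_subset[OF PF_sub fin])
      then have "card (PF BL F R H n) < card (PF BL F R H (Suc n))"
        using ne psubset_card_mono by blast
      with Suc show ?case by simp
    qed simp
    moreover have "card (PF BL F R H n) \<le> card (fst ` R)" for n
      by (rule card_mono[OF fin PF_sub])
    ultimately have "Suc (card (fst ` R)) \<le> card (fst ` R)" using le_trans by blast
    thus False by simp
  qed
  then obtain n where n: "PF BL F R H n = PF BL F R H (Suc n)" by blast
  have "PF BL F R H m = PF BL F R H n" if "m \<ge> n" for m
    using that
  proof (induction m)
    case 0 then show ?case by simp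
  next
    case (Suc m)
    show ?case
    proof (cases "Suc m = n")
      case False
      hence "m \<ge> n" using Suc.prems by simp
      hence "PF BL F R H m = PF BL F R H n" by (rule Suc.IH)
      hence "PF BL F R H (Suc m) = PF BL F R H (Suc n)"
        using PF_mono_arg[OF assms(1), of F R H m n] PF_mono_arg[OF assms(1), of F R H n m] by blast
      then show ?thesis using n by (rule trans[OF _ sym])
    qed simp
  qed
  thus "\<exists>n. \<forall>m\<ge>n. PF BL F R H m = PF BL F R H n" by blast
qed

end
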